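(* Let $X\in\mathbb R^{n\times p}$ be fixed and let $\mathbf y\in\mathbb R^n$ be a random vector with independent components satisfying, for some $\sigma\ge0$, $\mathbb E\,e^{t(\mathbf y_i-\mathbb E\mathbf y_i)}\le e^{\sigma^2t^2/2}$ for all $i$ and $t\in\mathbb R$; let $\hat Q(\beta)=\|X\beta-\mathbf y\|_2^2$. Let $\mathrm{cl}$ be a coding length with coding complexity $c(\cdot)$. Fix a target $\bar\beta\in\mathbb R^p$ and $\eta\in(0,1)$. Then with probability exceeding $1-\eta$, for all $\lambda\ge0$, $\epsilon\ge0$ and $\hat\beta\in\mathbb R^p$ such that $\hat Q(\hat\beta)+\lambda c(\hat\beta)\le\hat Q(\bar\beta)+\lambda c(\bar\beta)+\epsilon$, and for all $a>0$, \[ \|X\hat\beta-\mathbb E\mathbf y\|_2^2\le(1+a)\left[\|X\bar\beta-\mathbb E\mathbf y\|_2^2+2\sigma\sqrt{2\ln(6/\eta)}\|X\bar\beta-\mathbb E\mathbf y\|_2\right]+(1+a)\lambda c(\bar\beta)+a'c(\hat\beta)+b'\ln(6/\eta)+(1+a)\epsilon, \] where $a'=7.4(2+a+a^{-1})\sigma^2-(1+a)\lambda$ and $b'=4.7\sigma^2(2+a+a^{-1})$. Moreover, if the coding complexity $c(\cdot)$ is sub-additive, then \[ n\,\rho_-(c(\hat\beta)+c(\bar\beta))\|\hat\beta-\bar\beta\|_2^2\le10\|X\bar\beta-\mathbb E\mathbf y\|_2^2+2.5\lambda c(\bar\beta)+(37\sigma^2-2.5\lambda)c(\hat\beta)+29\sigma^2\ln(6/\eta)+2.5\epsilon.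 \]
   Context: Let $\mathcal I=\{1,\ldots,p\}$ and $\mathrm{supp}(\beta)=\{j:\beta_j\ne0\}$. A function $\mathrm{cl}$ from subsets of $\mathcal I$ to $[0,\infty]$ is a coding length if $\sum_{F\subset\mathcal I,\,F\ne\emptyset}2^{-\mathrm{cl}(F)}\le1$, with $\mathrm{cl}(\emptyset)=0$. The coding complexity is $c(F)=|F|+\mathrm{cl}(F)$ for $F\subset\mathcal I$, and $c(\beta)=\min\{c(F):\mathrm{supp}(\beta)\subset F\}$ for $\beta\in\mathbb R^p$; it is sub-additive if $c(F\cup F')\le c(F)+c(F')$ for all $F,F'\subset\mathcal I$. For $F\subset\mathcal I$, $\rho_-(F)=\inf\{\frac1n\|X\beta\|_2^2/\|\beta\|_2^2:\beta\ne0,\ \mathrm{supp}(\beta)\subset F\}$, and for $s>0$, $\rho_-(s)=\inf\{\rho_-(F):c(F)\le s\}$. *)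

theory Defs
  imports "HOL-Probability.Probability"
begin

text \<open>Index set I is the finite type 'p (so p = CARD('p)); vectors in R^p are real^'p,
  the design matrix X is real^'p^'n (n x p), observations are real^'n.\<close>

definition supp :: "real^'p \<Rightarrow> 'p set" where
  "supp \<beta> = {j. \<beta> $ j \<noteq> 0}"

definition pow2neg :: "ereal \<Rightarrow> real" where
  "pow2neg x = (case x of ereal r \<Rightarrow> 2 powr (- r) | _ \<Rightarrow> 0)"

definition coding_length :: "('p::finite set \<Rightarrow> ereal) \<Rightarrow> bool" where
  "coding_length cl \<longleftrightarrow> cl {} = 0 \<and> (\<forall>F. 0 \<le> cl F) \<and>
     (\<Sum>F \<in> Pow UNIV - {{}}. pow2neg (cl F)) \<le> 1"

definition cc_set :: "('p::finite set \<Rightarrow> ereal) \<Rightarrow> 'p set \<Rightarrow> ereal" where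
  "cc_set cl F = ereal (real (card F)) + cl F"

definition cc :: "('p::finite set \<Rightarrow> ereal) \<Rightarrow> real^'p \<Rightarrow> ereal" where
  "cc cl \<beta> = (INF F \<in> {F. supp \<beta> \<subseteq> F}. cc_set cl F)"

definition subadditive_cc :: "('p::finite set \<Rightarrow> ereal) \<Rightarrow> bool" where
  "subadditive_cc cl \<longleftrightarrow> (\<forall>F F'. cc_set cl (F \<union> F') \<le> cc_set cl F + cc_set cl F')"

text \<open>\<rho>_-(F); the infimum of the empty set is +\<infinity>.\<close>
definition rho_set :: "real^'p^'n \<Rightarrow> 'p set \<Rightarrow> ereal" where
  "rho_set X F = (INF \<beta> \<in> {\<beta>. \<beta> \<noteq> 0 \<and> supp \<beta> \<subseteq> F}.
      ereal ((1 / real CARD('n)) * (norm (X *v \<beta>))^2 / (norm \<beta>)^2))"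

definition rho_minus :: "real^'p^'n \<Rightarrow> ('p set \<Rightarrow> ereal) \<Rightarrow> ereal \<Rightarrow> ereal" where
  "rho_minus X cl s = (INF F \<in> {F. cc_set cl F \<le> s}. rho_set X F)"

end

theory Submission
  imports Defs
begin

lemma core1:
  fixes N D \<sigma> L lam eps cb ch K X1 X2 a :: real
  assumes "N \<ge> 0" "D \<ge> 0" "\<sigma> \<ge> 0" "L \<ge> 0" "K \<ge> 0" "a > 0"
    and h: "N\<^sup>2 \<le> D\<^sup>2 + 2*X1 + 2*X2 + lam*(cb - ch) + eps"
    and h1: "X1 \<le> N*K" and h2: "X2 \<le> \<sigma>* sqrt(2*L)*D"
    and hK: "K\<^sup>2 \<le> \<sigma>\<^sup>2*(7.4*ch + 4.7*L)"
  shows "N\<^sup>2 \<le> (1+a)*(D\<^sup>2 + 2*\<sigma>* sqrt(2*L)*D) + (1+a)*lam*cb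
     + (7.4*(2+a+1/a)*\<sigma>\<^sup>2 - (1+a)*lam)*ch + 4.7*\<sigma>\<^sup>2*(2+a+1/a)*L + (1+a)*eps"
proof -
  have ap: "a + a*a > 0" "1 + a > 0" using \<open>a>0\<close> by (simp_all add: add_pos_pos)
  have e: "a/(1+a)*N\<^sup>2 + (1+a)/a*K\<^sup>2 - 2*(N*K) = (a*N - (1+a)*K)\<^sup>2/(a*(1+a))"
    using \<open>a>0\<close> using ap by (simp add: field_simps power2_eq_square)
  have "0 \<le> (a*N - (1+a)*K)\<^sup>2/(a*(1+a))" using \<open>a>0\<close> by simp
  hence k: "2*(N*K) \<le> a/(1+a)*N\<^sup>2 + (1+a)/a*K\<^sup>2" using e by linarith
  have "N\<^sup>2 \<le> D\<^sup>2 + 2*\<sigma>* sqrt(2*L)*D + lam*(cb-ch) + eps + (a/(1+a)*N\<^sup>2 + (1+a)/a*K\<^sup>2)"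
    using h h1 h2 k by linarith
  moreover have "N\<^sup>2/(1+a) = N\<^sup>2 - a/(1+a)*N\<^sup>2" using ap by (simp add: field_simps)
  ultimately have "N\<^sup>2/(1+a) \<le> D\<^sup>2 + 2*\<sigma> * sqrt(2*L)*D + lam*(cb-ch) + eps + (1+a)/a*K\<^sup>2"
    by linarith
  hence "(1+a)*(N\<^sup>2/(1+a)) \<le> (1+a)*(D\<^sup>2 + 2*\<sigma> * sqrt(2*L)*D + lam*(cb-ch) + eps + (1+a)/a*K\<^sup>2)"
    using ap by (intro mult_left_mono) auto
  hence "N\<^sup>2 \<le> (1+a)*(D\<^sup>2 + 2*\<sigma> * sqrt(2*L)*D + lam*(cb-ch) + eps + (1+a)/a*K\<^sup>2)"
    using ap by simp
  also have "(1+a)/a*K\<^sup>2 \<le> (1+a)/a*(\<sigma>\<^sup>2*(7.4*ch + 4.7*L))"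
    using hK \<open>a>0\<close> by (intro mult_left_mono) auto
  hence "(1+a)*(D\<^sup>2 + 2*\<sigma>* sqrt(2*L)*D + lam*(cb-ch) + eps + (1+a)/a*K\<^sup>2)
     \<le> (1+a)*(D\<^sup>2 + 2*\<sigma>* sqrt(2*L)*D + lam*(cb-ch) + eps + (1+a)/a*(\<sigma>\<^sup>2*(7.4*ch + 4.7*L)))"
    using \<open>a>0\<close> by simp
  also have "\<dots> = (1+a)*(D\<^sup>2 + 2*\<sigma>* sqrt(2*L)*D) + (1+a)*lam*cb
     + (7.4*(2+a+1/a)*\<sigma>\<^sup>2 - (1+a)*lam)*ch + 4.7*\<sigma>\<^sup>2*(2+a+1/a)*L + (1+a)*eps"
    using \<open>a>0\<close> by (simp add: field_simps power2_eq_square)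
  finally show ?thesis .
qed

lemma core2:
  fixes N D \<sigma> L lam eps cb ch E :: real
  assumes "N \<ge> 0" "D \<ge> 0" "\<sigma> \<ge> 0" "L \<ge> 0"
    and h: "N\<^sup>2 \<le> (1+1)*(D\<^sup>2 + 2*\<sigma>* sqrt(2*L)*D) + (1+1)*lam*cb
     + (7.4*(2+1+1/1)*\<sigma>\<^sup>2 - (1+1)*lam)*ch + 4.7*\<sigma>\<^sup>2*(2+1+1/1)*L + (1+1)*eps"
    and hE: "E \<le> (N + D)\<^sup>2"
  shows "E \<le> 10*D\<^sup>2 + 2.5*lam*cb + (37*\<sigma>\<^sup>2 - 2.5*lam)*ch + 29*\<sigma>\<^sup>2*L + 2.5*eps"
proof -
  have s: "(sqrt(2*L))\<^sup>2 = 2*L" using \<open>L\<ge>0\<close> by simp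
  have "0 \<le> (D - \<sigma>* sqrt(2*L))\<^sup>2" by simp
  hence c: "2*\<sigma>* sqrt(2*L)*D \<le> D\<^sup>2 + 2*\<sigma>\<^sup>2*L"
    using s by (simp add: power2_eq_square algebra_simps)
  have "0 \<le> (N/2 - 2*D)\<^sup>2" by simp
  hence nd: "(N+D)\<^sup>2 \<le> 1.25*N\<^sup>2 + 5*D\<^sup>2"
    by (simp add: power2_eq_square algebra_simps)
  have "0 \<le> \<sigma>\<^sup>2 * L" using \<open>L\<ge>0\<close> by simp
  then show ?thesis using h hE c nd by (simp add: algebra_simps)
qed

lemma cc_attain:
  fixes cl :: "'p::finite set \<Rightarrow> ereal"
  shows "\<exists>F. supp \<beta> \<subseteq> F \<and> cc cl \<beta> = cc_set cl F"
proof -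
  let ?A = "cc_set cl ` {F. supp \<beta> \<subseteq> F}"
  have "Inf ?A \<in> ?A"
    by (rule finite_Inf_in) (auto simp: inf_min min_def)
  thus ?thesis unfolding cc_def by auto
qed

lemma cc_set_nonneg: "coding_length cl \<Longrightarrow> 0 \<le> cc_set cl F"
  unfolding coding_length_def cc_set_def by simp

lemma cc_nonneg: "coding_length cl \<Longrightarrow> 0 \<le> cc cl \<beta>"
  using cc_attain[of \<beta> cl] cc_set_nonneg by metis

lemma Xv_span:
  fixes X :: "real^'p^'n"
  assumes "supp \<beta> \<subseteq> F"
  shows "X *v \<beta> \<in> span ((\<lambda>j. column j X) ` F)"
proof -
  have "X *v \<beta> = (\<Sum>j\<in>UNIV. (\<beta>$j) *\<^sub>R column j X)"
    by (simp add: matrix_mult_sum scalar_mult_eq_scaleR)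
  also have "\<dots> = (\<Sum>j\<in>F. (\<beta>$j) *\<^sub>R column j X)"
    using assms by (intro sum.mono_neutral_right) (auto simp: supp_def)
  also have "\<dots> \<in> span ((\<lambda>j. column j X) ` F)"
    by (intro span_sum span_scale span_base) auto
  finally show ?thesis .
qed

lemma rho_set_le:
  fixes X :: "real^'p^'n"
  assumes "supp \<beta> \<subseteq> H" "\<beta> \<noteq> 0"
  shows "rho_set X H \<le> ereal ((1 / real CARD('n)) * (norm (X *v \<beta>))^2 / (norm \<beta>)^2)"
  unfolding rho_set_def using assms by (intro INF_lower) auto

lemma rho_minus_le:
  assumes "cc_set cl H \<le> s"
  shows "rho_minus X cl s \<le> rho_set X H"
  unfolding rho_minus_def using assms by (intro INF_lower) auto

lemma supp_diff: "supp (a - b) \<subseteq> supp a \<union> supp b"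
  unfolding supp_def by auto

lemma lhs2_bound:
  fixes X :: "real^'p^'n" and bh bb :: "real^'p"
  assumes "supp bh \<union> supp bb \<subseteq> H" "cc_set cl H \<le> s"
  shows "ereal (real CARD('n)) * rho_minus X cl s * ereal ((norm (bh - bb))\<^sup>2)
     \<le> ereal ((norm (X *v (bh - bb)))\<^sup>2)"
proof (cases "bh = bb")
  case True thus ?thesis by (simp add: zero_ereal_def[symmetric])
next
  case False
  hence nz: "bh - bb \<noteq> 0" by simp
  have "rho_minus X cl s \<le> ereal ((1 / real CARD('n)) * (norm (X *v (bh - bb)))^2 / (norm (bh - bb))^2)"
    using rho_minus_le[OF assms(2)] rho_set_le[OF _ nz, of H X] supp_diff[of bh bb] assms(1)
    by (meson order_trans subset_trans)
  hence "ereal (real CARD('n)) * rho_minus X cl s \<le> ereal (real CARD('n)) * ereal ((1 / real CARD('n)) * (norm (X *v (bh - bb)))^2 / (norm (bh - bb))^2)"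
    by (intro ereal_mult_left_mono) auto
  hence "ereal (real CARD('n)) * rho_minus X cl s * ereal ((norm (bh - bb))\<^sup>2) \<le>
     ereal (real CARD('n)) * ereal ((1 / real CARD('n)) * (norm (X *v (bh - bb)))^2 / (norm (bh - bb))^2) * ereal ((norm (bh - bb))\<^sup>2)"
    by (intro ereal_mult_right_mono) auto
  also have "\<dots> = ereal ((norm (X *v (bh - bb)))\<^sup>2)"
    using nz by simp
  finally show ?thesis .
qed

lemma det_good:
  fixes X :: "real^'p^'n" and y mu :: "real^'n" and bh bb :: "real^'p"
  assumes sig: "\<sigma> \<ge> 0" and L: "L \<ge> 0" and lam: "lam \<ge> 0"
    and hyp: "(norm (X *v bh - y))\<^sup>2 + lam * ch \<le> (norm (X *v bb - y))\<^sup>2 + lam * cb + eps"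
    and H1: "(mu - y) \<bullet> (X *v bb - mu) \<le> \<sigma> * sqrt (2 * L) * norm (X *v bb - mu)"
    and X1: "(y - mu) \<bullet> (X *v bh - mu) \<le> norm (X *v bh - mu) * K"
    and K: "K \<ge> 0" "K\<^sup>2 \<le> \<sigma>\<^sup>2 * (7.4 * ch + 4.7 * L)"
  shows "\<forall>a>0. (norm (X *v bh - mu))\<^sup>2 \<le> (1+a)*((norm (X *v bb - mu))\<^sup>2 + 2*\<sigma> * sqrt(2*L)*norm (X *v bb - mu)) + (1+a)*lam*cb
     + (7.4*(2+a+1/a)*\<sigma>\<^sup>2 - (1+a)*lam)*ch + 4.7*\<sigma>\<^sup>2*(2+a+1/a)*L + (1+a)*eps"
    and "(norm (X *v (bh - bb)))\<^sup>2 \<le> 10*(norm (X *v bb - mu))\<^sup>2 + 2.5*lam*cb + (37*\<sigma>\<^sup>2 - 2.5*lam)*ch + 29*\<sigma>\<^sup>2*L + 2.5*eps"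
proof -
  define u where "u = X *v bh - mu"
  define v where "v = X *v bb - mu"
  define \<xi> where "\<xi> = y - mu"
  have e: "\<And>w. (norm (w - \<xi>))\<^sup>2 = (norm w)\<^sup>2 - 2 * (\<xi> \<bullet> w) + (norm \<xi>)\<^sup>2"
    by (simp add: power2_norm_eq_inner inner_diff inner_commute algebra_simps)
  have "X *v bh - y = u - \<xi>" "X *v bb - y = v - \<xi>" by (simp_all add: u_def v_def \<xi>_def)
  hence h: "(norm u)\<^sup>2 \<le> (norm v)\<^sup>2 + 2*(\<xi> \<bullet> u) + 2*((mu - y) \<bullet> v) + lam*(cb - ch) + eps"
    using hyp e[of u] e[of v] by (simp add: \<xi>_def inner_minus_left algebra_simps)
  have c1: "\<forall>a>0. (norm u)\<^sup>2 \<le> (1+a)*((norm v)\<^sup>2 + 2*\<sigma> * sqrt(2*L)*norm v) + (1+a)*lam*cb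
     + (7.4*(2+a+1/a)*\<sigma>\<^sup>2 - (1+a)*lam)*ch + 4.7*\<sigma>\<^sup>2*(2+a+1/a)*L + (1+a)*eps"
  proof (intro allI impI)
    fix a :: real assume "a > 0"
    show "(norm u)\<^sup>2 \<le> (1+a)*((norm v)\<^sup>2 + 2*\<sigma> * sqrt(2*L)*norm v) + (1+a)*lam*cb
     + (7.4*(2+a+1/a)*\<sigma>\<^sup>2 - (1+a)*lam)*ch + 4.7*\<sigma>\<^sup>2*(2+a+1/a)*L + (1+a)*eps"
      by (rule core1[OF _ _ sig L K(1) \<open>a>0\<close> h _ _ K(2)])
         (use X1 H1 in \<open>auto simp: u_def v_def \<xi>_def\<close>)
  qed
  thus "\<forall>a>0. (norm (X *v bh - mu))\<^sup>2 \<le> (1+a)*((norm (X *v bb - mu))\<^sup>2 + 2*\<sigma> * sqrt(2*L)*norm (X *v bb - mu)) + (1+a)*lam*cb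
     + (7.4*(2+a+1/a)*\<sigma>\<^sup>2 - (1+a)*lam)*ch + 4.7*\<sigma>\<^sup>2*(2+a+1/a)*L + (1+a)*eps"
    by (simp add: u_def v_def)
  have "X *v (bh - bb) = u - v" by (simp add: u_def v_def algebra_simps)
  hence "norm (X *v (bh - bb)) \<le> norm u + norm v" using norm_triangle_ineq4 by metis
  hence E: "(norm (X *v (bh - bb)))\<^sup>2 \<le> (norm u + norm v)\<^sup>2"
    by (intro power_mono) auto
  have "(norm u)\<^sup>2 \<le> (1+1)*((norm v)\<^sup>2 + 2*\<sigma> * sqrt(2*L)*norm v) + (1+1)*lam*cb
     + (7.4*(2+1+1/1)*\<sigma>\<^sup>2 - (1+1)*lam)*ch + 4.7*\<sigma>\<^sup>2*(2+1+1/1)*L + (1+1)*eps"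
    using c1 by (metis zero_less_one)
  from core2[OF _ _ sig L this E]
  show "(norm (X *v (bh - bb)))\<^sup>2 \<le> 10*(norm (X *v bb - mu))\<^sup>2 + 2.5*lam*cb + (37*\<sigma>\<^sup>2 - 2.5*lam)*ch + 29*\<sigma>\<^sup>2*L + 2.5*eps"
    by (simp add: v_def)
qed

lemma ereal_mult_fin:
  assumes "lam = 0 \<or> c \<noteq> \<infinity>" "c \<ge> 0"
  shows "ereal (k * lam) * c = ereal (k * lam * real_of_ereal c)"
  using assms by (cases c) auto

lemma det:
  fixes X :: "real^'p^'n" and cl :: "'p set \<Rightarrow> ereal" and y mu :: "real^'n" and bb bh :: "real^'p"
  assumes cl: "coding_length cl" and sig: "\<sigma> \<ge> 0" and L: "L \<ge> 0" and lam: "lam \<ge> 0" and eps: "eps \<ge> 0"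
    and zero: "\<sigma> = 0 \<Longrightarrow> y = mu"
    and H1: "(mu - y) \<bullet> (X *v bb - mu) \<le> \<sigma> * sqrt (2 * L) * norm (X *v bb - mu)"
    and H2: "\<And>F r w. cl F = ereal r \<Longrightarrow> w \<in> span (insert mu ((\<lambda>j. column j X) ` F)) \<Longrightarrow>
        (y - mu) \<bullet> w \<le> norm w * (\<sigma> * sqrt (7.4 * (real (card F) + r) + 4.7 * L))"
    and hyp: "ereal ((norm (X *v bh - y))\<^sup>2) + ereal lam * cc cl bh
             \<le> ereal ((norm (X *v bb - y))\<^sup>2) + ereal lam * cc cl bb + ereal eps"
  shows "(\<forall>a > 0.
              ereal ((norm (X *v bh - mu))\<^sup>2)
              \<le> ereal ((1 + a) * ((norm (X *v bb - mu))\<^sup>2 + 2 * \<sigma> * sqrt (2 * L) * norm (X *v bb - mu)))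
                 + ereal ((1 + a) * lam) * cc cl bb
                 + ereal (7.4 * (2 + a + 1 / a) * \<sigma>\<^sup>2 - (1 + a) * lam) * cc cl bh
                 + ereal (4.7 * \<sigma>\<^sup>2 * (2 + a + 1 / a) * L)
                 + ereal ((1 + a) * eps)) \<and>
           (subadditive_cc cl \<longrightarrow>
              ereal (real CARD('n)) * rho_minus X cl (cc cl bh + cc cl bb)
                 * ereal ((norm (bh - bb))\<^sup>2)
              \<le> ereal (10 * (norm (X *v bb - mu))\<^sup>2) + ereal (2.5 * lam) * cc cl bb
                 + ereal (37 * \<sigma>\<^sup>2 - 2.5 * lam) * cc cl bh
                 + ereal (29 * \<sigma>\<^sup>2 * L) + ereal (2.5 * eps))"
proof -
  have cbb0: "cc cl bb \<ge> 0" and cbh0: "cc cl bh \<ge> 0" using cc_nonneg[OF cl] by auto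
  have apos: "\<And>a::real. a > 0 \<Longrightarrow> 2 + a + 1/a > 0" by (simp add: add_pos_pos)
  obtain F where F: "supp bh \<subseteq> F" "cc cl bh = cc_set cl F" using cc_attain by blast
  show ?thesis
  proof (cases "cc cl bh = \<infinity>")
    case inf: True
    show ?thesis
    proof (cases "lam > 0")
      case True
      have "cc cl bb = \<infinity>"
      proof (rule ccontr)
        assume "cc cl bb \<noteq> \<infinity>"
        then obtain c where "cc cl bb = ereal c" using cbb0 by (cases "cc cl bb") auto
        thus False using hyp inf True by simp
      qed
      thus ?thesis using True by simp
    next
      case False
      hence lam0: "lam = 0" using lam by simp
      show ?thesis
      proof (cases "\<sigma> > 0")
        case True
        have t0: "ereal (k * lam) * cc cl bb = 0" for k using lam0 by (simp add: zero_ereal_def[symmetric])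
        show ?thesis
        proof (intro conjI allI impI)
          fix a :: real assume "a > 0"
          hence "7.4 * (2 + a + 1 / a) * \<sigma>\<^sup>2 - (1 + a) * lam > 0"
            using apos[of a] True lam0 by simp
          hence T: "ereal (7.4 * (2 + a + 1 / a) * \<sigma>\<^sup>2 - (1 + a) * lam) * cc cl bh = \<infinity>"
            using inf by simp
          show "ereal ((norm (X *v bh - mu))\<^sup>2)
              \<le> ereal ((1 + a) * ((norm (X *v bb - mu))\<^sup>2 + 2 * \<sigma> * sqrt (2 * L) * norm (X *v bb - mu)))
                 + ereal ((1 + a) * lam) * cc cl bb
                 + ereal (7.4 * (2 + a + 1 / a) * \<sigma>\<^sup>2 - (1 + a) * lam) * cc cl bh
                 + ereal (4.7 * \<sigma>\<^sup>2 * (2 + a + 1 / a) * L)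
                 + ereal ((1 + a) * eps)" unfolding T t0 by simp
        next
          have T: "ereal (37 * \<sigma>\<^sup>2 - 2.5 * lam) * cc cl bh = \<infinity>"
            using inf True lam0 by simp
          show "ereal (real CARD('n)) * rho_minus X cl (cc cl bh + cc cl bb)
                 * ereal ((norm (bh - bb))\<^sup>2)
              \<le> ereal (10 * (norm (X *v bb - mu))\<^sup>2) + ereal (2.5 * lam) * cc cl bb
                 + ereal (37 * \<sigma>\<^sup>2 - 2.5 * lam) * cc cl bh
                 + ereal (29 * \<sigma>\<^sup>2 * L) + ereal (2.5 * eps)" unfolding T t0 by simp
        qed
      next
        case False
        hence s0: "\<sigma> = 0" using sig by simp
        hence y: "y = mu" by (rule zero)
        have h: "(norm (X *v bh - y))\<^sup>2 + lam * 0 \<le> (norm (X *v bb - y))\<^sup>2 + lam * 0 + eps"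
          using hyp lam0 by (simp add: zero_ereal_def[symmetric])
        note G = det_good[OF sig L lam h H1, of 0]
        have g1: "\<forall>a>0. (norm (X *v bh - mu))\<^sup>2 \<le> (1+a)*((norm (X *v bb - mu))\<^sup>2 + 2*\<sigma> * sqrt(2*L)*norm (X *v bb - mu)) + (1+a)*eps"
          using G(1) y s0 lam0 by simp
        have g2: "(norm (X *v (bh - bb)))\<^sup>2 \<le> 10*(norm (X *v bb - mu))\<^sup>2 + 2.5*eps"
          using G(2) y s0 lam0 by simp
        have l2: "ereal (real CARD('n)) * rho_minus X cl (cc cl bh + cc cl bb) * ereal ((norm (bh - bb))\<^sup>2)
                   \<le> ereal ((norm (X *v (bh - bb)))\<^sup>2)"
          by (rule lhs2_bound[of bh bb UNIV]) (auto simp: inf)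
        show ?thesis using g1 g2 l2 inf lam0 s0 by (auto simp: zero_ereal_def[symmetric] intro: order_trans)
      qed
    qed
  next
    case fin: False
    then obtain ch where ch: "cc cl bh = ereal ch" using cbh0 by (cases "cc cl bh") auto
    obtain r where r: "cl F = ereal r" "ch = real (card F) + r"
      using F(2) ch unfolding cc_set_def by (cases "cl F") auto
    define K where "K = \<sigma> * sqrt (7.4 * ch + 4.7 * L)"
    have r0: "r \<ge> 0" using cl r(1) unfolding coding_length_def by (metis ereal_less_eq(5))
    have ch0: "ch \<ge> 0" using r r0 by simp
    have K0: "K \<ge> 0" using sig ch0 L by (simp add: K_def)
    have K2: "K\<^sup>2 \<le> \<sigma>\<^sup>2 * (7.4 * ch + 4.7 * L)" using ch0 L by (simp add: K_def power_mult_distrib)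
    have "X *v bh \<in> span (insert mu ((\<lambda>j. column j X) ` F))"
      using Xv_span[OF F(1), of X] span_mono[of "(\<lambda>j. column j X) ` F" "insert mu ((\<lambda>j. column j X) ` F)"] by blast
    hence "X *v bh - mu \<in> span (insert mu ((\<lambda>j. column j X) ` F))"
      by (intro span_diff) (auto intro: span_base)
    from H2[OF r(1) this] have X1: "(y - mu) \<bullet> (X *v bh - mu) \<le> norm (X *v bh - mu) * K"
      by (simp add: K_def r(2))
    show ?thesis
    proof (cases "lam > 0 \<and> cc cl bb = \<infinity>")
      case True thus ?thesis by simp
    next
      case False
      hence nf: "lam = 0 \<or> cc cl bb \<noteq> \<infinity>" using lam by auto
      define cb where "cb = real_of_ereal (cc cl bb)"
      have m: "\<And>k. ereal (k * lam) * cc cl bb = ereal (k * lam * cb)"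
        unfolding cb_def by (rule ereal_mult_fin[OF nf cbb0])
      have m1: "ereal lam * cc cl bb = ereal (lam * cb)" using m[of 1] by simp
      have h: "(norm (X *v bh - y))\<^sup>2 + lam * ch \<le> (norm (X *v bb - y))\<^sup>2 + lam * cb + eps"
        using hyp m1 ch by simp
      note G = det_good[OF sig L lam h H1 X1 K0 K2]
      have c1: "\<forall>a > 0.
              ereal ((norm (X *v bh - mu))\<^sup>2)
              \<le> ereal ((1 + a) * ((norm (X *v bb - mu))\<^sup>2 + 2 * \<sigma> * sqrt (2 * L) * norm (X *v bb - mu)))
                 + ereal ((1 + a) * lam) * cc cl bb
                 + ereal (7.4 * (2 + a + 1 / a) * \<sigma>\<^sup>2 - (1 + a) * lam) * cc cl bh
                 + ereal (4.7 * \<sigma>\<^sup>2 * (2 + a + 1 / a) * L)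
                 + ereal ((1 + a) * eps)"
        using G(1) m ch by simp
      have c2: "subadditive_cc cl \<longrightarrow>
              ereal (real CARD('n)) * rho_minus X cl (cc cl bh + cc cl bb)
                 * ereal ((norm (bh - bb))\<^sup>2)
              \<le> ereal (10 * (norm (X *v bb - mu))\<^sup>2) + ereal (2.5 * lam) * cc cl bb
                 + ereal (37 * \<sigma>\<^sup>2 - 2.5 * lam) * cc cl bh
                 + ereal (29 * \<sigma>\<^sup>2 * L) + ereal (2.5 * eps)"
      proof
        assume sub: "subadditive_cc cl"
        obtain H where H: "supp bh \<union> supp bb \<subseteq> H" "cc_set cl H \<le> cc cl bh + cc cl bb"
        proof (cases "cc cl bb = \<infinity>")
          case True thus ?thesis using that[of UNIV] ch by simp
        next
          case False
          obtain G where G: "supp bb \<subseteq> G" "cc cl bb = cc_set cl G" using cc_attain by blast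
          show ?thesis using that[of "F \<union> G"] F G sub unfolding subadditive_cc_def by auto
        qed
        have "ereal (real CARD('n)) * rho_minus X cl (cc cl bh + cc cl bb) * ereal ((norm (bh - bb))\<^sup>2)
                   \<le> ereal ((norm (X *v (bh - bb)))\<^sup>2)"
          by (rule lhs2_bound[OF H])
        also have "\<dots> \<le> ereal (10 * (norm (X *v bb - mu))\<^sup>2) + ereal (2.5 * lam) * cc cl bb
                 + ereal (37 * \<sigma>\<^sup>2 - 2.5 * lam) * cc cl bh
                 + ereal (29 * \<sigma>\<^sup>2 * L) + ereal (2.5 * eps)"
          using G(2) ch unfolding m by simp
        finally show "ereal (real CARD('n)) * rho_minus X cl (cc cl bh + cc cl bb) * ereal ((norm (bh - bb))\<^sup>2)
              \<le> ereal (10 * (norm (X *v bb - mu))\<^sup>2) + ereal (2.5 * lam) * cc cl bb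
                 + ereal (37 * \<sigma>\<^sup>2 - 2.5 * lam) * cc cl bh
                 + ereal (29 * \<sigma>\<^sup>2 * L) + ereal (2.5 * eps)" .
      qed
      show ?thesis using c1 c2 by blast
    qed
  qed
qed

lemma nd_nn_integral: "s > 0 \<Longrightarrow> (\<integral>\<^sup>+x. ennreal (normal_density m s x) \<partial>lborel) = 1"
  by (subst nn_integral_eq_integral) auto

lemma gauss_mgf:
  "(\<integral>\<^sup>+x. ennreal (std_normal_density x * exp (a * x)) \<partial>lborel) = ennreal (exp (a\<^sup>2 / 2))"
proof -
  have "\<And>x. std_normal_density x * exp (a * x) = exp (a\<^sup>2 / 2) * normal_density a 1 x"
    unfolding normal_density_def
    by (simp add: mult_exp_exp power2_eq_square algebra_simps diff_divide_distrib add_divide_distrib)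
  hence "(\<integral>\<^sup>+x. ennreal (std_normal_density x * exp (a * x)) \<partial>lborel)
       = (\<integral>\<^sup>+x. ennreal (exp (a\<^sup>2 / 2)) * ennreal (normal_density a 1 x) \<partial>lborel)"
    by (simp add: ennreal_mult)
  also have "\<dots> = ennreal (exp (a\<^sup>2 / 2))"
    by (simp add: nn_integral_cmult nd_nn_integral del: ennreal_mult)
  finally show ?thesis .
qed

lemma gauss_sq:
  "(\<integral>\<^sup>+x. ennreal (std_normal_density x * exp (x\<^sup>2 / 4)) \<partial>lborel) = ennreal (sqrt 2)"
proof -
  have "\<And>x. std_normal_density x * exp (x\<^sup>2 / 4) = sqrt 2 * normal_density 0 (sqrt 2) x"
    unfolding normal_density_def
    by (simp add: mult_exp_exp real_sqrt_mult power2_eq_square field_simps)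
  hence "(\<integral>\<^sup>+x. ennreal (std_normal_density x * exp (x\<^sup>2 / 4)) \<partial>lborel)
       = (\<integral>\<^sup>+x. ennreal (sqrt 2) * ennreal (normal_density 0 (sqrt 2) x) \<partial>lborel)"
    by (simp add: ennreal_mult)
  also have "\<dots> = ennreal (sqrt 2)"
    by (simp add: nn_integral_cmult nd_nn_integral del: ennreal_mult)
  finally show ?thesis .
qed

lemma norm_sq_sum: "(norm (w::real^'n))\<^sup>2 = (\<Sum>i\<in>UNIV. (w$i)\<^sup>2)"
  unfolding power2_norm_eq_inner inner_vec_def by (simp add: power2_eq_square)

lemma mgf_lin:
  fixes M :: "'a measure" and Y :: "'a \<Rightarrow> real^'n" and EY w :: "real^'n"
  assumes P: "prob_space M"
    and indep: "prob_space.indep_vars M (\<lambda>_. borel) (\<lambda>i \<omega>. Y \<omega> $ i) UNIV"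
    and EY: "EY = (\<chi> i. prob_space.expectation M (\<lambda>\<omega>. Y \<omega> $ i))"
    and mgf_integ: "\<And>i t. integrable M
          (\<lambda>\<omega>. exp (t * (Y \<omega> $ i - prob_space.expectation M (\<lambda>\<omega>. Y \<omega> $ i))))"
    and subgauss: "\<And>i t. prob_space.expectation M
          (\<lambda>\<omega>. exp (t * (Y \<omega> $ i - prob_space.expectation M (\<lambda>\<omega>. Y \<omega> $ i))))
          \<le> exp (\<sigma>\<^sup>2 * t\<^sup>2 / 2)"
  shows "(\<integral>\<^sup>+\<omega>. ennreal (exp (w \<bullet> (Y \<omega> - EY))) \<partial>M) \<le> ennreal (exp (\<sigma>\<^sup>2 * (norm w)\<^sup>2 / 2))"
proof -
  interpret prob_space M by (rule P)
  have "(\<integral>\<^sup>+\<omega>. ennreal (exp (w \<bullet> (Y \<omega> - EY))) \<partial>M)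
      = (\<integral>\<^sup>+\<omega>. (\<Prod>i\<in>UNIV. ennreal (exp (w$i * (Y \<omega> $ i - EY $ i)))) \<partial>M)"
    by (intro nn_integral_cong)
       (simp add: inner_vec_def exp_sum prod_ennreal)
  also have "\<dots> = (\<Prod>i\<in>UNIV. \<integral>\<^sup>+\<omega>. ennreal (exp (w$i * (Y \<omega> $ i - EY $ i))) \<partial>M)"
    by (intro indep_vars_nn_integral indep_vars_compose2[OF indep]) auto
  also have "\<dots> \<le> (\<Prod>i\<in>UNIV. ennreal (exp (\<sigma>\<^sup>2 * (w$i)\<^sup>2 / 2)))"
  proof (intro prod_mono_ennreal)
    fix i
    have "(\<integral>\<^sup>+\<omega>. ennreal (exp (w$i * (Y \<omega> $ i - EY $ i))) \<partial>M)
        = ennreal (expectation (\<lambda>\<omega>. exp (w$i * (Y \<omega> $ i - expectation (\<lambda>\<omega>. Y \<omega> $ i)))))"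
      using mgf_integ[of "w$i" i] by (subst nn_integral_eq_integral) (auto simp: EY)
    also have "\<dots> \<le> ennreal (exp (\<sigma>\<^sup>2 * (w$i)\<^sup>2 / 2))"
      using subgauss[of "w$i" i] by (intro ennreal_leI)
    finally show "(\<integral>\<^sup>+\<omega>. ennreal (exp (w$i * (Y \<omega> $ i - EY $ i))) \<partial>M) \<le> ennreal (exp (\<sigma>\<^sup>2 * (w$i)\<^sup>2 / 2))" .
  qed
  also have "\<dots> = ennreal (exp (\<sigma>\<^sup>2 * (norm w)\<^sup>2 / 2))"
    by (simp add: prod_ennreal exp_sum[symmetric] norm_sq_sum sum_distrib_left sum_divide_distrib)
  finally show ?thesis .
qed

lemma inner_meas:
  fixes Y :: "'a \<Rightarrow> real^'n"
  assumes meas: "\<And>i. (\<lambda>\<omega>. Y \<omega> $ i) \<in> borel_measurable M"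
  shows "(\<lambda>\<omega>. w \<bullet> (Y \<omega> - EY)) \<in> borel_measurable M"
proof -
  have "(\<lambda>\<omega>. w \<bullet> (Y \<omega> - EY)) = (\<lambda>\<omega>. \<Sum>i\<in>UNIV. w$i * (Y \<omega> $ i - EY$i))"
    by (simp add: inner_vec_def)
  also have "\<dots> \<in> borel_measurable M" using meas by measurable
  finally show ?thesis .
qed

lemma tail_lin:
  fixes M :: "'a measure" and Y :: "'a \<Rightarrow> real^'n" and EY w :: "real^'n"
  assumes P: "prob_space M"
    and meas: "\<And>i. (\<lambda>\<omega>. Y \<omega> $ i) \<in> borel_measurable M"
    and mgf: "\<And>w. (\<integral>\<^sup>+\<omega>. ennreal (exp (w \<bullet> (Y \<omega> - EY))) \<partial>M) \<le> ennreal (exp (\<sigma>\<^sup>2 * (norm w)\<^sup>2 / 2))"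
    and sig: "\<sigma> > 0" and L: "L \<ge> 0"
  shows "measure M {\<omega>\<in>space M. w \<bullet> (Y \<omega> - EY) > \<sigma> * sqrt (2 * L) * norm w} \<le> exp (- L)"
proof -
  interpret prob_space M by (rule P)
  show ?thesis
  proof (cases "w = 0 \<or> L = 0")
    case True
    thus ?thesis
    proof
      assume "w = 0" thus ?thesis by simp
    next
      assume "L = 0" thus ?thesis by simp
    qed
  next
    case False
    hence w: "norm w > 0" and Lp: "L > 0" using L by auto
    define t where "t = \<sigma> * sqrt (2 * L) * norm w"
    define s where "s = t / (\<sigma>\<^sup>2 * (norm w)\<^sup>2)"
    have t: "t > 0" using sig w Lp by (simp add: t_def)
    have s: "s > 0" using t sig w by (simp add: s_def)
    note fm = inner_meas[OF meas, of w EY]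
    have "{\<omega>\<in>space M. w \<bullet> (Y \<omega> - EY) > t} \<subseteq> {\<omega>\<in>space M. w \<bullet> (Y \<omega> - EY) \<ge> t}" by auto
    hence "emeasure M {\<omega>\<in>space M. w \<bullet> (Y \<omega> - EY) > t} \<le> emeasure M {\<omega>\<in>space M. w \<bullet> (Y \<omega> - EY) \<ge> t}"
      by (intro emeasure_mono) (use fm in measurable)
    also have "\<dots> \<le> ennreal (exp (-s * t)) * (\<integral>\<^sup>+\<omega>. ennreal (exp (s * (w \<bullet> (Y \<omega> - EY)))) * indicator (space M) \<omega> \<partial>M)"
      by (rule Chernoff_ineq_nn_integral_ge[OF s]) (use fm in auto)
    also have "(\<integral>\<^sup>+\<omega>. ennreal (exp (s * (w \<bullet> (Y \<omega> - EY)))) * indicator (space M) \<omega> \<partial>M)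
        = (\<integral>\<^sup>+\<omega>. ennreal (exp ((s *\<^sub>R w) \<bullet> (Y \<omega> - EY))) \<partial>M)"
      by (intro nn_integral_cong) auto
    also have "ennreal (exp (-s * t)) * \<dots> \<le> ennreal (exp (-s * t)) * ennreal (exp (\<sigma>\<^sup>2 * (norm (s *\<^sub>R w))\<^sup>2 / 2))"
      by (intro mult_left_mono mgf) auto
    also have "\<dots> = ennreal (exp (-s * t + \<sigma>\<^sup>2 * (norm (s *\<^sub>R w))\<^sup>2 / 2))"
      by (simp add: ennreal_mult[symmetric] exp_add[symmetric])
    also have "-s * t + \<sigma>\<^sup>2 * (norm (s *\<^sub>R w))\<^sup>2 / 2 = - L"
    proof -
      have "(sqrt (2*L))\<^sup>2 = 2 * L" using L by simp
      thus ?thesis using sig w unfolding s_def t_def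
        by (simp add: power2_eq_square field_simps)
    qed
    finally have "emeasure M {\<omega>\<in>space M. w \<bullet> (Y \<omega> - EY) > t} \<le> ennreal (exp (-L))" .
    thus ?thesis unfolding t_def by (simp add: emeasure_eq_measure)
  qed
qed

abbreviation "NN \<equiv> density lborel (\<lambda>x. ennreal (std_normal_density x))"

lemma NN_mgf: "(\<integral>\<^sup>+x. ennreal (exp (a * x)) \<partial>NN) = ennreal (exp (a\<^sup>2 / 2))"
  by (subst nn_integral_density) (auto simp: gauss_mgf ennreal_mult'[symmetric] simp del: ennreal_mult')

lemma NN_sq: "(\<integral>\<^sup>+x. ennreal (exp (x\<^sup>2 / 4)) \<partial>NN) = ennreal (sqrt 2)"
  by (subst nn_integral_density) (auto simp: gauss_sq ennreal_mult'[symmetric] simp del: ennreal_mult')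

lemma NN_prob: "prob_space NN"
  by (rule prob_space_normal_density) simp

lemma norm_sum_on:
  fixes B :: "'a::real_inner set"
  assumes "finite B" "pairwise orthogonal B" "\<And>b. b \<in> B \<Longrightarrow> norm b = 1"
  shows "(norm (\<Sum>b\<in>B. g b *\<^sub>R b))\<^sup>2 = (\<Sum>b\<in>B. (g b)\<^sup>2)"
proof -
  have ip: "\<And>b b'. b \<in> B \<Longrightarrow> b' \<in> B \<Longrightarrow> b \<bullet> b' = (if b' = b then 1 else 0)"
    using assms(2,3) unfolding pairwise_def orthogonal_def
    by (auto simp: power2_norm_eq_inner[symmetric])
  have "(norm (\<Sum>b\<in>B. g b *\<^sub>R b))\<^sup>2 = (\<Sum>b\<in>B. \<Sum>b'\<in>B. g b * g b' * (b \<bullet> b'))"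
    unfolding power2_norm_eq_inner by (simp add: inner_sum_left inner_sum_right sum_distrib_left mult.assoc inner_commute mult.left_commute)
  also have "\<dots> = (\<Sum>b\<in>B. \<Sum>b'\<in>B. (if b' = b then g b * g b' else 0))"
    by (intro sum.cong refl) (simp add: ip)
  also have "\<dots> = (\<Sum>b\<in>B. (g b)\<^sup>2)"
    using assms(1) by (simp add: power2_eq_square)
  finally show ?thesis .
qed

lemma mgf_quad:
  fixes M :: "'a measure" and Y :: "'a \<Rightarrow> real^'n" and EY :: "real^'n" and B :: "(real^'n) set"
  assumes P: "prob_space M"
    and meas: "\<And>i. (\<lambda>\<omega>. Y \<omega> $ i) \<in> borel_measurable M"
    and mgf: "\<And>w. (\<integral>\<^sup>+\<omega>. ennreal (exp (w \<bullet> (Y \<omega> - EY))) \<partial>M) \<le> ennreal (exp (\<sigma>\<^sup>2 * (norm w)\<^sup>2 / 2))"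
    and sig: "\<sigma> > 0"
    and B: "finite B" "pairwise orthogonal B" "\<And>b. b \<in> B \<Longrightarrow> norm b = 1"
  shows "(\<integral>\<^sup>+\<omega>. ennreal (exp ((\<Sum>b\<in>B. (b \<bullet> (Y \<omega> - EY))\<^sup>2) / (4 * \<sigma>\<^sup>2))) \<partial>M) \<le> ennreal (sqrt 2 ^ card B)"
proof -
  interpret prob_space M by (rule P)
  interpret N: prob_space NN by (rule NN_prob)
  interpret PS: product_prob_space "\<lambda>_::real^'n. NN" B
    by (rule product_prob_spaceI) (rule NN_prob)
  define PP where "PP = PiM B (\<lambda>_. NN)"
  have PPp: "prob_space PP" unfolding PP_def by (intro prob_space_PiM NN_prob)
  interpret PPs: prob_space PP by (rule PPp)
  interpret pair_sigma_finite M PP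
    by (intro pair_sigma_finite.intro) (unfold_locales)
  define c where "c = 1 / (\<sigma> * sqrt 2)"
  have c2: "c\<^sup>2 = 1 / (2 * \<sigma>\<^sup>2)" using sig by (simp add: c_def power2_eq_square field_simps)
  define z where "z \<omega> b = b \<bullet> (Y \<omega> - EY)" for \<omega> b
  note zm = inner_meas[OF meas]
  have step1: "ennreal (exp ((\<Sum>b\<in>B. (z \<omega> b)\<^sup>2) / (4 * \<sigma>\<^sup>2)))
      = (\<integral>\<^sup>+g. ennreal (exp (c * (\<Sum>b\<in>B. z \<omega> b * g b))) \<partial>PP)" for \<omega>
  proof -
    have "(\<integral>\<^sup>+g. ennreal (exp (c * (\<Sum>b\<in>B. z \<omega> b * g b))) \<partial>PP)
        = (\<integral>\<^sup>+g. (\<Prod>b\<in>B. ennreal (exp (c * z \<omega> b * g b))) \<partial>PP)"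
      by (intro nn_integral_cong) (simp add: sum_distrib_left exp_sum B(1) prod_ennreal mult.assoc)
    also have "\<dots> = (\<Prod>b\<in>B. \<integral>\<^sup>+x. ennreal (exp (c * z \<omega> b * x)) \<partial>NN)"
      unfolding PP_def by (rule PS.product_nn_integral_prod) (auto simp: B(1))
    also have "\<dots> = (\<Prod>b\<in>B. ennreal (exp ((c * z \<omega> b)\<^sup>2 / 2)))"
      by (simp add: NN_mgf)
    also have "\<dots> = ennreal (exp ((\<Sum>b\<in>B. (z \<omega> b)\<^sup>2) / (4 * \<sigma>\<^sup>2)))"
      by (simp add: prod_ennreal exp_sum[OF B(1), symmetric] power_mult_distrib c2 sum_divide_distrib)
    finally show ?thesis by simp
  qed
  have "(\<integral>\<^sup>+\<omega>. ennreal (exp ((\<Sum>b\<in>B. (b \<bullet> (Y \<omega> - EY))\<^sup>2) / (4 * \<sigma>\<^sup>2))) \<partial>M)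
      = (\<integral>\<^sup>+\<omega>. (\<integral>\<^sup>+g. ennreal (exp (c * (\<Sum>b\<in>B. z \<omega> b * g b))) \<partial>PP) \<partial>M)"
    using step1 by (simp add: z_def)
  also have "\<dots> = (\<integral>\<^sup>+g. (\<integral>\<^sup>+\<omega>. ennreal (exp (c * (\<Sum>b\<in>B. z \<omega> b * g b))) \<partial>M) \<partial>PP)"
  proof (rule Fubini'[symmetric])
    have [measurable]: "(\<lambda>\<omega>. z \<omega> b) \<in> borel_measurable M" for b unfolding z_def by (rule zm)
    show "case_prod (\<lambda>\<omega> g. ennreal (exp (c * (\<Sum>b\<in>B. z \<omega> b * g b)))) \<in> borel_measurable (M \<Otimes>\<^sub>M PP)"
      unfolding PP_def by measurable
  qed
  also have "\<dots> \<le> (\<integral>\<^sup>+g. ennreal (exp ((\<Sum>b\<in>B. (g b)\<^sup>2) / 4)) \<partial>PP)"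
  proof (rule nn_integral_mono)
    fix g
    have "(\<integral>\<^sup>+\<omega>. ennreal (exp (c * (\<Sum>b\<in>B. z \<omega> b * g b))) \<partial>M)
        = (\<integral>\<^sup>+\<omega>. ennreal (exp ((c *\<^sub>R (\<Sum>b\<in>B. g b *\<^sub>R b)) \<bullet> (Y \<omega> - EY))) \<partial>M)"
      by (simp add: z_def inner_sum_left sum_distrib_left mult.commute mult.left_commute)
    also have "\<dots> \<le> ennreal (exp (\<sigma>\<^sup>2 * (norm (c *\<^sub>R (\<Sum>b\<in>B. g b *\<^sub>R b)))\<^sup>2 / 2))"
      by (rule mgf)
    also have "\<sigma>\<^sup>2 * (norm (c *\<^sub>R (\<Sum>b\<in>B. g b *\<^sub>R b)))\<^sup>2 / 2 = (\<Sum>b\<in>B. (g b)\<^sup>2) / 4"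
      using sig by (simp add: power_mult_distrib norm_sum_on[OF B] c2)
    finally show "(\<integral>\<^sup>+\<omega>. ennreal (exp (c * (\<Sum>b\<in>B. z \<omega> b * g b))) \<partial>M) \<le> ennreal (exp ((\<Sum>b\<in>B. (g b)\<^sup>2) / 4))" .
  qed
  also have "(\<integral>\<^sup>+g. ennreal (exp ((\<Sum>b\<in>B. (g b)\<^sup>2) / 4)) \<partial>PP)
      = (\<integral>\<^sup>+g. (\<Prod>b\<in>B. ennreal (exp ((g b)\<^sup>2 / 4))) \<partial>PP)"
    by (intro nn_integral_cong) (simp add: exp_sum B(1) prod_ennreal sum_divide_distrib)
  also have "\<dots> = (\<Prod>b\<in>B. \<integral>\<^sup>+x. ennreal (exp (x\<^sup>2 / 4)) \<partial>NN)"
    unfolding PP_def by (rule PS.product_nn_integral_prod) (auto simp: B(1))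
  also have "\<dots> = ennreal (sqrt 2 ^ card B)"
    by (simp add: NN_sq prod_ennreal ennreal_power)
  finally show ?thesis .
qed

lemma quad_meas:
  fixes Y :: "'a \<Rightarrow> real^'n"
  assumes meas: "\<And>i. (\<lambda>\<omega>. Y \<omega> $ i) \<in> borel_measurable M"
  shows "(\<lambda>\<omega>. \<Sum>b\<in>B. (b \<bullet> (Y \<omega> - EY))\<^sup>2) \<in> borel_measurable M"
proof -
  have [measurable]: "(\<lambda>\<omega>. b \<bullet> (Y \<omega> - EY)) \<in> borel_measurable M" for b by (rule inner_meas[OF meas])
  show ?thesis by measurable
qed

lemma tail_quad:
  fixes M :: "'a measure" and Y :: "'a \<Rightarrow> real^'n" and EY :: "real^'n" and B :: "(real^'n) set"
  assumes P: "prob_space M"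
    and meas: "\<And>i. (\<lambda>\<omega>. Y \<omega> $ i) \<in> borel_measurable M"
    and mgf: "\<And>w. (\<integral>\<^sup>+\<omega>. ennreal (exp (w \<bullet> (Y \<omega> - EY))) \<partial>M) \<le> ennreal (exp (\<sigma>\<^sup>2 * (norm w)\<^sup>2 / 2))"
    and sig: "\<sigma> > 0"
    and B: "finite B" "pairwise orthogonal B" "\<And>b. b \<in> B \<Longrightarrow> norm b = 1"
  shows "measure M {\<omega>\<in>space M. (\<Sum>b\<in>B. (b \<bullet> (Y \<omega> - EY))\<^sup>2) > T} \<le> sqrt 2 ^ card B * exp (- T / (4 * \<sigma>\<^sup>2))"
proof -
  interpret prob_space M by (rule P)
  define s where "s = 1 / (4 * \<sigma>\<^sup>2)"
  have s: "s > 0" using sig by (simp add: s_def)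
  note fm = quad_meas[OF meas, where B=B and EY=EY]
  have "{\<omega>\<in>space M. (\<Sum>b\<in>B. (b \<bullet> (Y \<omega> - EY))\<^sup>2) > T} \<subseteq> {\<omega>\<in>space M. (\<Sum>b\<in>B. (b \<bullet> (Y \<omega> - EY))\<^sup>2) \<ge> T}" by auto
  hence "emeasure M {\<omega>\<in>space M. (\<Sum>b\<in>B. (b \<bullet> (Y \<omega> - EY))\<^sup>2) > T} \<le> emeasure M {\<omega>\<in>space M. (\<Sum>b\<in>B. (b \<bullet> (Y \<omega> - EY))\<^sup>2) \<ge> T}"
    by (intro emeasure_mono) (use fm in measurable)
  also have "\<dots> \<le> ennreal (exp (-s * T)) * (\<integral>\<^sup>+\<omega>. ennreal (exp (s * (\<Sum>b\<in>B. (b \<bullet> (Y \<omega> - EY))\<^sup>2))) * indicator (space M) \<omega> \<partial>M)"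
    by (rule Chernoff_ineq_nn_integral_ge[OF s]) (use fm in auto)
  also have "(\<integral>\<^sup>+\<omega>. ennreal (exp (s * (\<Sum>b\<in>B. (b \<bullet> (Y \<omega> - EY))\<^sup>2))) * indicator (space M) \<omega> \<partial>M)
      = (\<integral>\<^sup>+\<omega>. ennreal (exp ((\<Sum>b\<in>B. (b \<bullet> (Y \<omega> - EY))\<^sup>2) / (4 * \<sigma>\<^sup>2))) \<partial>M)"
    by (intro nn_integral_cong) (auto simp: s_def)
  also have "ennreal (exp (-s * T)) * \<dots> \<le> ennreal (exp (-s * T)) * ennreal (sqrt 2 ^ card B)"
    by (intro mult_left_mono mgf_quad[OF P meas mgf sig B]) auto
  also have "\<dots> = ennreal (sqrt 2 ^ card B * exp (- T / (4 * \<sigma>\<^sup>2)))"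
    by (simp add: ennreal_mult[symmetric] s_def mult.commute)
  finally have "ennreal (measure M {\<omega>\<in>space M. (\<Sum>b\<in>B. (b \<bullet> (Y \<omega> - EY))\<^sup>2) > T}) \<le> ennreal (sqrt 2 ^ card B * exp (- T / (4 * \<sigma>\<^sup>2)))"
    unfolding emeasure_eq_measure .
  moreover have nn: "0 \<le> sqrt 2 ^ card B * exp (- T / (4 * \<sigma>\<^sup>2))" by simp
  ultimately show ?thesis using ennreal_le_iff[OF nn] by blast
qed

lemma proj_bound:
  fixes B :: "'a::real_inner set"
  assumes B: "finite B" "pairwise orthogonal B" "\<And>b. b \<in> B \<Longrightarrow> norm b = 1"
    and w: "w \<in> span B"
  shows "x \<bullet> w \<le> norm w * sqrt (\<Sum>b\<in>B. (b \<bullet> x)\<^sup>2)"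
proof -
  define z where "z = (\<Sum>b\<in>B. (b \<bullet> x) *\<^sub>R b)"
  have ip: "\<And>b b'. b \<in> B \<Longrightarrow> b' \<in> B \<Longrightarrow> b \<bullet> b' = (if b' = b then 1 else 0)"
    using B(2,3) unfolding pairwise_def orthogonal_def
    by (auto simp: power2_norm_eq_inner[symmetric])
  have "orthogonal (x - z) y" if y: "y \<in> B" for y
  proof -
    have "z \<bullet> y = (\<Sum>b\<in>B. (b \<bullet> x) * (b \<bullet> y))" by (simp add: z_def inner_sum_left)
    also have "\<dots> = (\<Sum>b\<in>B. if b = y then (b \<bullet> x) else 0)"
      by (intro sum.cong refl) (simp add: ip y)
    also have "\<dots> = y \<bullet> x" using B(1) y by simp
    finally show ?thesis unfolding orthogonal_def by (simp add: inner_diff_left inner_diff_right inner_commute)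
  qed
  hence "orthogonal (x - z) w" by (intro orthogonal_to_span[OF w])
  hence "x \<bullet> w = z \<bullet> w" unfolding orthogonal_def by (simp add: inner_diff_left)
  also have "\<dots> \<le> norm z * norm w" by (rule norm_cauchy_schwarz)
  also have "norm z = sqrt (\<Sum>b\<in>B. (b \<bullet> x)\<^sup>2)"
  proof -
    have nz: "(norm z)\<^sup>2 = (\<Sum>b\<in>B. (b \<bullet> x)\<^sup>2)"
      using norm_sum_on[OF B, of "\<lambda>b. b \<bullet> x"] unfolding z_def .
    have "norm z = sqrt ((norm z)\<^sup>2)" by simp
    thus ?thesis using nz by simp
  qed
  finally show ?thesis by (simp add: mult.commute)
qed

lemma sigma0_AE:
  fixes M :: "'a measure" and Y :: "'a \<Rightarrow> real^'n"
  assumes P: "prob_space M"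
    and mgf_integ: "\<And>i t. integrable M
          (\<lambda>\<omega>. exp (t * (Y \<omega> $ i - prob_space.expectation M (\<lambda>\<omega>. Y \<omega> $ i))))"
    and subgauss: "\<And>i t. prob_space.expectation M
          (\<lambda>\<omega>. exp (t * (Y \<omega> $ i - prob_space.expectation M (\<lambda>\<omega>. Y \<omega> $ i))))
          \<le> exp (0\<^sup>2 * t\<^sup>2 / 2)"
  shows "AE \<omega> in M. Y \<omega> $ i = prob_space.expectation M (\<lambda>\<omega>. Y \<omega> $ i)"
proof -
  interpret prob_space M by (rule P)
  define m where "m = expectation (\<lambda>\<omega>. Y \<omega> $ i)"
  define f where "f \<omega> = exp (1 * (Y \<omega> $ i - m)) + exp ((-1) * (Y \<omega> $ i - m)) - 2" for \<omega>
  have fi: "integrable M f" unfolding f_def m_def using mgf_integ[of 1 i] mgf_integ[of "-1" i] by auto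
  have sq: "f \<omega> = (exp ((Y \<omega> $ i - m)/2) - exp (-(Y \<omega> $ i - m)/2))\<^sup>2" for \<omega>
  proof -
    have e: "exp (x/2) * exp (x/2) = exp x" "exp (x/2) * exp (-x/2) = 1" "exp (-x/2) * exp (-x/2) = exp (-x)" for x :: real
      by (simp_all flip: exp_add)
    show ?thesis unfolding f_def power2_eq_square using e[of "Y \<omega> $ i - m"]
      by (simp add: algebra_simps)
  qed
  have f0: "0 \<le> f \<omega>" for \<omega> by (simp add: sq)
  have "integral\<^sup>L M f = expectation (\<lambda>\<omega>. exp (1 * (Y \<omega> $ i - m))) + expectation (\<lambda>\<omega>. exp ((-1) * (Y \<omega> $ i - m))) - 2"
    unfolding f_def m_def using mgf_integ[of 1 i] mgf_integ[of "-1" i] by (simp add: prob_space)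
  also have "\<dots> \<le> 0" using subgauss[of 1 i] subgauss[of "-1" i] by (simp add: m_def)
  finally have "integral\<^sup>L M f \<le> 0" .
  moreover have "integral\<^sup>L M f \<ge> 0" using f0 by (simp add: integral_nonneg)
  ultimately have "integral\<^sup>L M f = 0" by simp
  hence "AE \<omega> in M. f \<omega> = 0" using integral_nonneg_eq_0_iff_AE[OF fi] f0 by simp
  thus ?thesis
  proof (rule AE_mp, intro AE_I2 impI)
    fix \<omega> assume "f \<omega> = 0"
    hence "exp ((Y \<omega> $ i - m)/2) = exp (-(Y \<omega> $ i - m)/2)" by (simp add: sq)
    hence "(Y \<omega> $ i - m)/2 = -(Y \<omega> $ i - m)/2" by simp
    hence "Y \<omega> $ i - m = 0" by (simp add: field_simps)
    thus "Y \<omega> $ i = expectation (\<lambda>\<omega>. Y \<omega> $ i)" by (simp add: m_def)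
  qed
qed

lemma num_bound:
  fixes d :: nat and k r \<eta> \<sigma> L :: real
  assumes d: "real d \<le> k + 1" and k: "k \<ge> 0" and r: "r \<ge> 0" and \<eta>: "\<eta> > 0"
    and L: "L = ln (6 / \<eta>)" and L0: "L \<ge> 0" and sig: "\<sigma> > 0"
  shows "sqrt 2 ^ d * exp (- (\<sigma>\<^sup>2 * (7.4 * (k + r) + 4.7 * L)) / (4 * \<sigma>\<^sup>2)) \<le> \<eta> / 3 * 2 powr (- r)"
proof -
  define l where "l = ln (2::real)"
  have l: "0 < l" "l < 1" using ln_2_less_1 by (auto simp: l_def)
  have s2: "sqrt 2 = exp (l / 2)"
  proof -
    have "exp (l/2) * exp (l/2) = 2" by (simp add: l_def flip: exp_add)
    hence "(exp (l/2))\<^sup>2 = 2" by (simp add: power2_eq_square)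
    thus ?thesis by (metis exp_ge_zero real_sqrt_unique)
  qed
  have pd: "sqrt 2 ^ d = exp (real d * (l / 2))" unfolding s2 exp_of_nat_mult ..
  have ex: "exp (- (\<sigma>\<^sup>2 * (7.4 * (k + r) + 4.7 * L)) / (4 * \<sigma>\<^sup>2)) = exp (- (7.4 * (k + r) + 4.7 * L) / 4)"
  proof -
    have "- (\<sigma>\<^sup>2 * (7.4 * (k + r) + 4.7 * L)) / (4 * \<sigma>\<^sup>2) = - (7.4 * (k + r) + 4.7 * L) / 4"
      using sig by (simp add: field_simps)
    thus ?thesis by simp
  qed
  have eL: "exp (- L) = \<eta> / 6" using \<eta> by (simp add: L exp_minus)
  have pr: "(2::real) powr (- r) = exp (- r * l)" by (simp add: powr_def l_def)
  have "\<eta> / 3 * 2 powr (- r) = exp (l - L - r * l)"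
  proof -
    have "exp (l - L - r * l) = exp l * exp (- L) * exp (- r * l)" by (simp flip: exp_add)
    also have "\<dots> = 2 * (\<eta> / 6) * 2 powr (- r)" by (simp add: l_def eL pr)
    finally show ?thesis by simp
  qed
  moreover have "sqrt 2 ^ d * exp (- (\<sigma>\<^sup>2 * (7.4 * (k + r) + 4.7 * L)) / (4 * \<sigma>\<^sup>2))
      = exp (real d * (l / 2) + - (7.4 * (k + r) + 4.7 * L) / 4)"
    unfolding pd ex exp_add ..
  moreover have "real d * (l / 2) + - (7.4 * (k + r) + 4.7 * L) / 4 \<le> l - L - r * l"
  proof -
    have "real d * l \<le> (k + 1) * l" using d l by (intro mult_right_mono) auto
    moreover have "k * l \<le> k" using k l by (simp add: mult_left_le)
    moreover have "r * l \<le> r" using r l by (simp add: mult_left_le)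
    ultimately show ?thesis using k r L0 l by (simp add: field_simps)
  qed
  ultimately show ?thesis by simp
qed

lemma pow2neg_sum:
  fixes cl :: "'p::finite set \<Rightarrow> ereal"
  assumes cl: "coding_length cl"
  shows "(\<Sum>F\<in>UNIV. pow2neg (cl F)) \<le> 2"
proof -
  have "(\<Sum>F\<in>UNIV. pow2neg (cl F)) = pow2neg (cl {}) + (\<Sum>F\<in>UNIV - {{}}. pow2neg (cl F))"
    by (rule sum.remove) auto
  also have "(UNIV :: 'p set set) = Pow UNIV" by simp
  also have "pow2neg (cl {}) = 1" using cl by (simp add: coding_length_def pow2neg_def zero_ereal_def)
  finally show ?thesis using cl unfolding coding_length_def by simp
qed

lemma pow2neg_nonneg: "pow2neg x \<ge> 0"
  unfolding pow2neg_def by (cases x) auto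

lemma good_event:
  fixes M :: "'a measure" and Y :: "'a \<Rightarrow> real^'n"
    and X :: "real^'p^'n" and cl :: "'p set \<Rightarrow> ereal"
    and \<sigma> \<eta> :: real and bb :: "real^'p"
  assumes P: "prob_space M"
    and indep: "prob_space.indep_vars M (\<lambda>_. borel) (\<lambda>i \<omega>. Y \<omega> $ i) UNIV"
    and integ: "\<And>i. integrable M (\<lambda>\<omega>. Y \<omega> $ i)"
    and \<sigma>_nonneg: "\<sigma> \<ge> 0"
    and mgf_integ: "\<And>i t. integrable M
          (\<lambda>\<omega>. exp (t * (Y \<omega> $ i - prob_space.expectation M (\<lambda>\<omega>. Y \<omega> $ i))))"
    and subgauss: "\<And>i t. prob_space.expectation M
          (\<lambda>\<omega>. exp (t * (Y \<omega> $ i - prob_space.expectation M (\<lambda>\<omega>. Y \<omega> $ i))))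
          \<le> exp (\<sigma>\<^sup>2 * t\<^sup>2 / 2)"
    and cl: "coding_length cl"
    and \<eta>: "0 < \<eta>" "\<eta> < 1"
    and EY: "EY = (\<chi> i. prob_space.expectation M (\<lambda>\<omega>. Y \<omega> $ i))"
    and L: "L = ln (6 / \<eta>)"
  shows "\<exists>A \<in> sets M. measure M A > 1 - \<eta> \<and>
    (\<forall>\<omega>\<in>A. (\<sigma> = 0 \<longrightarrow> Y \<omega> = EY) \<and>
       (EY - Y \<omega>) \<bullet> (X *v bb - EY) \<le> \<sigma> * sqrt (2 * L) * norm (X *v bb - EY) \<and>
       (\<forall>F r w. cl F = ereal r \<longrightarrow> w \<in> span (insert EY ((\<lambda>j. column j X) ` F)) \<longrightarrow>
          (Y \<omega> - EY) \<bullet> w \<le> norm w * (\<sigma> * sqrt (7.4 * (real (card F) + r) + 4.7 * L))))"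
proof -
  interpret prob_space M by (rule P)
  have meas[measurable]: "(\<lambda>\<omega>. Y \<omega> $ i) \<in> borel_measurable M" for i using integ by auto
  have L0: "L \<ge> 0" using \<eta> by (simp add: L)
  show ?thesis
  proof (cases "\<sigma> = 0")
    case True
    define A where "A = {\<omega>\<in>space M. \<forall>i. Y \<omega> $ i = EY $ i}"
    have As: "A \<in> sets M" unfolding A_def by measurable
    have "AE \<omega> in M. \<forall>i\<in>UNIV. Y \<omega> $ i = EY $ i"
      by (intro AE_finite_allI) (use sigma0_AE[OF P mgf_integ] subgauss True in \<open>auto simp: EY\<close>)
    hence "prob A = 1" unfolding A_def using prob_Collect_eq_1 As A_def by auto
    moreover have "\<forall>\<omega>\<in>A. Y \<omega> = EY" unfolding A_def by (auto simp: vec_eq_iff)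
    ultimately show ?thesis using As \<eta> True by (intro bexI[of _ A]) auto
  next
    case False
    hence sig: "\<sigma> > 0" using \<sigma>_nonneg by simp
    have mgf: "\<And>w. (\<integral>\<^sup>+\<omega>. ennreal (exp (w \<bullet> (Y \<omega> - EY))) \<partial>M) \<le> ennreal (exp (\<sigma>\<^sup>2 * (norm w)\<^sup>2 / 2))"
      by (rule mgf_lin[OF P indep EY mgf_integ subgauss])
    define V where "V F = span (insert EY ((\<lambda>j. column j X) ` F))" for F
    have exB: "\<exists>B. B \<subseteq> V F \<and> pairwise orthogonal B \<and> (\<forall>x\<in>B. norm x = 1) \<and> independent B \<and> card B = dim (V F) \<and> span B = V F" for F
    proof -
      obtain B where "B \<subseteq> V F" "pairwise orthogonal B" "\<And>x. x \<in> B \<Longrightarrow> norm x = 1"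
              "independent B" "card B = dim (V F)" "span B = V F"
        using orthonormal_basis_subspace[OF subspace_span, of "insert EY ((\<lambda>j. column j X) ` F)"]
        unfolding V_def by metis
      thus ?thesis by blast
    qed
    define Bs where "Bs F = (SOME B. B \<subseteq> V F \<and> pairwise orthogonal B \<and> (\<forall>x\<in>B. norm x = 1) \<and> independent B \<and> card B = dim (V F) \<and> span B = V F)" for F
    have Bs: "pairwise orthogonal (Bs F)" "\<And>x. x \<in> Bs F \<Longrightarrow> norm x = 1" "independent (Bs F)"
             "card (Bs F) = dim (V F)" "span (Bs F) = V F" for F
      using someI_ex[OF exB[of F]] unfolding Bs_def[symmetric] by auto
    have Bfin: "finite (Bs F)" for F using Bs(3) independent_imp_finite by blast
    have Bcard: "real (card (Bs F)) \<le> real (card F) + 1" for F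
    proof -
      let ?S = "insert EY ((\<lambda>j. column j X) ` F)"
      have "card (Bs F) = dim (span ?S)" using Bs(4) by (simp add: V_def)
      also have "\<dots> \<le> card ?S" by (rule dim_le_card) auto
      also have "\<dots> \<le> card ((\<lambda>j. column j X) ` F) + 1" by (simp add: card_insert_if)
      also have "\<dots> \<le> card F + 1" using card_image_le[of F "\<lambda>j. column j X"] by simp
      finally show ?thesis by simp
    qed
    define T where "T F = \<sigma>\<^sup>2 * (7.4 * (real (card F) + real_of_ereal (cl F)) + 4.7 * L)" for F
    define bad where "bad F = (if cl F = \<infinity> then {} else {\<omega>\<in>space M. (\<Sum>b\<in>Bs F. (b \<bullet> (Y \<omega> - EY))\<^sup>2) > T F})" for F
    define bad0 where "bad0 = {\<omega>\<in>space M. (EY - X *v bb) \<bullet> (Y \<omega> - EY) > \<sigma> * sqrt (2 * L) * norm (EY - X *v bb)}"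
    define A where "A = space M - (bad0 \<union> (\<Union>F. bad F))"
    have [measurable]: "(\<lambda>\<omega>. w \<bullet> (Y \<omega> - EY)) \<in> borel_measurable M" for w by (rule inner_meas[OF meas])
    have [measurable]: "(\<lambda>\<omega>. \<Sum>b\<in>B. (b \<bullet> (Y \<omega> - EY))\<^sup>2) \<in> borel_measurable M" for B by (rule quad_meas[OF meas])
    have b0s: "bad0 \<in> sets M" unfolding bad0_def by measurable
    have bs: "bad F \<in> sets M" for F unfolding bad_def by (cases "cl F = \<infinity>") (auto)
    have As: "A \<in> sets M" unfolding A_def using b0s bs by auto
    have m0: "measure M bad0 \<le> \<eta> / 6"
    proof -
      have "measure M bad0 \<le> exp (- L)" unfolding bad0_def by (rule tail_lin[OF P meas mgf sig L0])
      also have "exp (- L) = \<eta> / 6" using \<eta> by (simp add: L exp_minus)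
      finally show ?thesis .
    qed
    have mF: "measure M (bad F) \<le> \<eta> / 3 * pow2neg (cl F)" for F
    proof (cases "cl F")
      case (real r)
      have r0: "r \<ge> 0" using cl real unfolding coding_length_def by (metis ereal_less_eq(5))
      have "measure M (bad F) \<le> sqrt 2 ^ card (Bs F) * exp (- T F / (4 * \<sigma>\<^sup>2))"
        using tail_quad[OF P meas mgf sig Bfin Bs(1,2), where T="T F"] real by (simp add: bad_def)
      also have "\<dots> \<le> \<eta> / 3 * 2 powr (- r)"
        unfolding T_def real using num_bound[OF Bcard _ r0 \<eta>(1) L L0 sig] by simp
      finally show ?thesis by (simp add: pow2neg_def real)
    next
      case PInf thus ?thesis by (simp add: bad_def pow2neg_def)
    next
      case MInf thus ?thesis using cl unfolding coding_length_def by (metis ereal_less_eq(5) MInfty_neq_ereal(1) not_MInfty_nonneg)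
    qed
    have "measure M (bad0 \<union> (\<Union>F. bad F)) \<le> measure M bad0 + measure M (\<Union>F. bad F)"
      using b0s bs by (intro measure_Un_le) auto
    also have "measure M (\<Union>F. bad F) \<le> (\<Sum>F\<in>UNIV. measure M (bad F))"
      using bs by (intro measure_UNION_le) auto
    also have "\<dots> \<le> (\<Sum>F\<in>UNIV. \<eta> / 3 * pow2neg (cl F))" by (intro sum_mono mF)
    also have "\<dots> = \<eta> / 3 * (\<Sum>F\<in>UNIV. pow2neg (cl F))" by (simp add: sum_distrib_left)
    also have "\<dots> \<le> \<eta> / 3 * 2" using pow2neg_sum[OF cl] \<eta> by (intro mult_left_mono) auto
    finally have "measure M (bad0 \<union> (\<Union>F. bad F)) \<le> 5 * \<eta> / 6" using m0 by simp
    hence mA: "measure M A > 1 - \<eta>"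
      unfolding A_def using prob_compl[of "bad0 \<union> (\<Union>F. bad F)"] b0s bs \<eta> by auto
    have good: "(EY - Y \<omega>) \<bullet> (X *v bb - EY) \<le> \<sigma> * sqrt (2 * L) * norm (X *v bb - EY) \<and>
       (\<forall>F r w. cl F = ereal r \<longrightarrow> w \<in> span (insert EY ((\<lambda>j. column j X) ` F)) \<longrightarrow>
          (Y \<omega> - EY) \<bullet> w \<le> norm w * (\<sigma> * sqrt (7.4 * (real (card F) + r) + 4.7 * L)))" if \<omega>: "\<omega> \<in> A" for \<omega>
    proof (intro conjI allI impI)
      have "\<omega> \<in> space M" "\<omega> \<notin> bad0" using \<omega> by (auto simp: A_def)
      hence "(EY - X *v bb) \<bullet> (Y \<omega> - EY) \<le> \<sigma> * sqrt (2 * L) * norm (EY - X *v bb)"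
        by (auto simp: bad0_def)
      moreover have "(EY - Y \<omega>) \<bullet> (X *v bb - EY) = (EY - X *v bb) \<bullet> (Y \<omega> - EY)"
        by (simp add: inner_diff_left inner_diff_right inner_commute)
      moreover have "norm (EY - X *v bb) = norm (X *v bb - EY)" by (rule norm_minus_commute)
      ultimately show "(EY - Y \<omega>) \<bullet> (X *v bb - EY) \<le> \<sigma> * sqrt (2 * L) * norm (X *v bb - EY)" by simp
    next
      fix F r w assume r: "cl F = ereal r" and w: "w \<in> span (insert EY ((\<lambda>j. column j X) ` F))"
      have "\<omega> \<in> space M" "\<omega> \<notin> bad F" using \<omega> by (auto simp: A_def)
      hence q: "(\<Sum>b\<in>Bs F. (b \<bullet> (Y \<omega> - EY))\<^sup>2) \<le> T F" using r by (auto simp: bad_def)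
      have wB: "w \<in> span (Bs F)" using w Bs(5) by (simp add: V_def)
      have "(Y \<omega> - EY) \<bullet> w \<le> norm w * sqrt (\<Sum>b\<in>Bs F. (b \<bullet> (Y \<omega> - EY))\<^sup>2)"
        by (rule proj_bound[OF Bfin Bs(1,2) wB])
      also have "\<dots> \<le> norm w * sqrt (T F)" using q by (intro mult_left_mono) auto
      also have "sqrt (T F) = \<sigma> * sqrt (7.4 * (real (card F) + r) + 4.7 * L)"
        using sig by (simp add: T_def r real_sqrt_mult)
      finally show "(Y \<omega> - EY) \<bullet> w \<le> norm w * (\<sigma> * sqrt (7.4 * (real (card F) + r) + 4.7 * L))" .
    qed
    show ?thesis using As mA good False by (intro bexI[of _ A]) auto
  qed
qed

theorem lemma7:
  fixes M :: "'a measure" and Y :: "'a \<Rightarrow> real^'n"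
    and X :: "real^'p^'n" and cl :: "'p set \<Rightarrow> ereal"
    and \<sigma> \<eta> :: real and bb :: "real^'p"
  assumes "prob_space M"
    and indep: "prob_space.indep_vars M (\<lambda>_. borel) (\<lambda>i \<omega>. Y \<omega> $ i) UNIV"
    and integ: "\<And>i. integrable M (\<lambda>\<omega>. Y \<omega> $ i)"
    and \<sigma>_nonneg: "\<sigma> \<ge> 0"
    and mgf_integ: "\<And>i t. integrable M
          (\<lambda>\<omega>. exp (t * (Y \<omega> $ i - prob_space.expectation M (\<lambda>\<omega>. Y \<omega> $ i))))"
    and subgauss: "\<And>i t. prob_space.expectation M
          (\<lambda>\<omega>. exp (t * (Y \<omega> $ i - prob_space.expectation M (\<lambda>\<omega>. Y \<omega> $ i))))
          \<le> exp (\<sigma>\<^sup>2 * t\<^sup>2 / 2)"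
    and cl: "coding_length cl"
    and \<eta>: "0 < \<eta>" "\<eta> < 1"
  shows "\<exists>A \<in> sets M. measure M A > 1 - \<eta> \<and>
    (\<forall>\<omega> \<in> A. \<forall>lam \<ge> 0. \<forall>eps \<ge> 0. \<forall>bh :: real^'p.
       (let EY = (\<chi> i. prob_space.expectation M (\<lambda>\<omega>. Y \<omega> $ i));
            Qhat = (\<lambda>\<beta>. (norm (X *v \<beta> - Y \<omega>))\<^sup>2);
            D = norm (X *v bb - EY);
            L = ln (6 / \<eta>)
        in ereal (Qhat bh) + ereal lam * cc cl bh
             \<le> ereal (Qhat bb) + ereal lam * cc cl bb + ereal eps \<longrightarrow>
           (\<forall>a > 0.
              ereal ((norm (X *v bh - EY))\<^sup>2)
              \<le> ereal ((1 + a) * (D\<^sup>2 + 2 * \<sigma> * sqrt (2 * L) * D))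
                 + ereal ((1 + a) * lam) * cc cl bb
                 + ereal (7.4 * (2 + a + 1 / a) * \<sigma>\<^sup>2 - (1 + a) * lam) * cc cl bh
                 + ereal (4.7 * \<sigma>\<^sup>2 * (2 + a + 1 / a) * L)
                 + ereal ((1 + a) * eps)) \<and>
           (subadditive_cc cl \<longrightarrow>
              ereal (real CARD('n)) * rho_minus X cl (cc cl bh + cc cl bb)
                 * ereal ((norm (bh - bb))\<^sup>2)
              \<le> ereal (10 * D\<^sup>2) + ereal (2.5 * lam) * cc cl bb
                 + ereal (37 * \<sigma>\<^sup>2 - 2.5 * lam) * cc cl bh
                 + ereal (29 * \<sigma>\<^sup>2 * L) + ereal (2.5 * eps))))"
proof -
  define EY where "EY = (\<chi> i. prob_space.expectation M (\<lambda>\<omega>. Y \<omega> $ i))"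
  define L where "L = ln (6 / \<eta>)"
  have L0: "L \<ge> 0" using \<eta> by (simp add: L_def)
  obtain A where A: "A \<in> sets M" "measure M A > 1 - \<eta>" and
    good: "\<And>\<omega>. \<omega> \<in> A \<Longrightarrow> (\<sigma> = 0 \<longrightarrow> Y \<omega> = EY) \<and>
       (EY - Y \<omega>) \<bullet> (X *v bb - EY) \<le> \<sigma> * sqrt (2 * L) * norm (X *v bb - EY) \<and>
       (\<forall>F r w. cl F = ereal r \<longrightarrow> w \<in> span (insert EY ((\<lambda>j. column j X) ` F)) \<longrightarrow>
          (Y \<omega> - EY) \<bullet> w \<le> norm w * (\<sigma> * sqrt (7.4 * (real (card F) + r) + 4.7 * L)))"
    using good_event[OF assms(1) indep integ \<sigma>_nonneg mgf_integ subgauss cl \<eta> EY_def L_def, where X=X and bb=bb]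
    by blast
  show ?thesis
  proof (rule bexI[OF _ A(1)], intro conjI A(2) ballI allI impI)
    fix \<omega> and lam eps :: real and bh :: "real^'p"
    assume \<omega>: "\<omega> \<in> A" and lam: "lam \<ge> 0" and eps: "eps \<ge> 0"
    note g = good[OF \<omega>]
    show "let EY = (\<chi> i. prob_space.expectation M (\<lambda>\<omega>. Y \<omega> $ i));
            Qhat = (\<lambda>\<beta>. (norm (X *v \<beta> - Y \<omega>))\<^sup>2);
            D = norm (X *v bb - EY);
            L = ln (6 / \<eta>)
        in ereal (Qhat bh) + ereal lam * cc cl bh
             \<le> ereal (Qhat bb) + ereal lam * cc cl bb + ereal eps \<longrightarrow>
           (\<forall>a > 0.
              ereal ((norm (X *v bh - EY))\<^sup>2)
              \<le> ereal ((1 + a) * (D\<^sup>2 + 2 * \<sigma> * sqrt (2 * L) * D))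
                 + ereal ((1 + a) * lam) * cc cl bb
                 + ereal (7.4 * (2 + a + 1 / a) * \<sigma>\<^sup>2 - (1 + a) * lam) * cc cl bh
                 + ereal (4.7 * \<sigma>\<^sup>2 * (2 + a + 1 / a) * L)
                 + ereal ((1 + a) * eps)) \<and>
           (subadditive_cc cl \<longrightarrow>
              ereal (real CARD('n)) * rho_minus X cl (cc cl bh + cc cl bb)
                 * ereal ((norm (bh - bb))\<^sup>2)
              \<le> ereal (10 * D\<^sup>2) + ereal (2.5 * lam) * cc cl bb
                 + ereal (37 * \<sigma>\<^sup>2 - 2.5 * lam) * cc cl bh
                 + ereal (29 * \<sigma>\<^sup>2 * L) + ereal (2.5 * eps))"
      unfolding Let_def EY_def[symmetric] L_def[symmetric]
    proof (intro impI)
      assume hyp: "ereal ((norm (X *v bh - Y \<omega>))\<^sup>2) + ereal lam * cc cl bh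
             \<le> ereal ((norm (X *v bb - Y \<omega>))\<^sup>2) + ereal lam * cc cl bb + ereal eps"
      show "(\<forall>a > 0.
              ereal ((norm (X *v bh - EY))\<^sup>2)
              \<le> ereal ((1 + a) * ((norm (X *v bb - EY))\<^sup>2 + 2 * \<sigma> * sqrt (2 * L) * norm (X *v bb - EY)))
                 + ereal ((1 + a) * lam) * cc cl bb
                 + ereal (7.4 * (2 + a + 1 / a) * \<sigma>\<^sup>2 - (1 + a) * lam) * cc cl bh
                 + ereal (4.7 * \<sigma>\<^sup>2 * (2 + a + 1 / a) * L)
                 + ereal ((1 + a) * eps)) \<and>
           (subadditive_cc cl \<longrightarrow>
              ereal (real CARD('n)) * rho_minus X cl (cc cl bh + cc cl bb)
                 * ereal ((norm (bh - bb))\<^sup>2)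
              \<le> ereal (10 * (norm (X *v bb - EY))\<^sup>2) + ereal (2.5 * lam) * cc cl bb
                 + ereal (37 * \<sigma>\<^sup>2 - 2.5 * lam) * cc cl bh
                 + ereal (29 * \<sigma>\<^sup>2 * L) + ereal (2.5 * eps))"
        by (rule det[OF cl \<sigma>_nonneg L0 lam eps _ _ _ hyp]) (use g in auto)
    qed
  qed
qed

end
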